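(* For $\mathbf F\in\mathcal M_1^n$ and $\Lambda\in\mathcal Q_n$, we have $\mathcal C(\mathbf F)=\mathcal C(\Lambda\otimes\mathbf F)$.
   Context: $\mathcal M_1$ is the set of cdfs on $\mathbb{R}$ with finite mean. Quantile function: $F^{-1}(p)=\inf\{x:F(x)\ge p\}$, $p\in(0,1)$. For $F,G\in\mathcal M_1$, $F\prec_{\mathrm{cx}}G$ means $\int\phi\,\mathrm dF\le\int\phi\,\mathrm dG$ for all convex $\phi$. $F_1\oplus\dots\oplus F_n$ is the cdf with quantile function $F_1^{-1}+\dots+F_n^{-1}$. For $\mathbf F=(F_1,\dots,F_n)\in\mathcal M_1^n$, $\mathcal C(\mathbf F)=\{G\in\mathcal M_1: G\prec_{\mathrm{cx}}F_1\oplus\dots\oplus F_n\}$. $\mathcal Q_n$ is the set of $n\times n$ doubly stochastic matrices. For $\Lambda=(\Lambda_{ij})\in\mathcal Q_n$, the quantile mixture $\Lambda\otimes\mathbf F=(G_1,\dots,G_n)$ is the tuple of cdfs with $G_i^{-1}=\sum_{j=1}^n\Lambda_{ij}F_j^{-1}$. *)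

theory Defs
  imports "HOL-Analysis.Analysis"
begin

definition is_cdf :: "(real \<Rightarrow> real) \<Rightarrow> bool" where
  "is_cdf F \<longleftrightarrow> mono F \<and> (\<forall>x. continuous (at_right x) F) \<and>
     (F \<longlongrightarrow> 0) at_bot \<and> (F \<longlongrightarrow> 1) at_top"

abbreviation dist_of :: "(real \<Rightarrow> real) \<Rightarrow> real measure" where
  "dist_of F \<equiv> interval_measure F"

definition M1 :: "(real \<Rightarrow> real) set" where
  "M1 = {F. is_cdf F \<and> integrable (dist_of F) (\<lambda>x. x)}"

text \<open>Quantile function (meaningful for p in (0,1)).\<close>
definition quantile :: "(real \<Rightarrow> real) \<Rightarrow> real \<Rightarrow> real" where
  "quantile F p = Inf {x. F x \<ge> p}"

text \<open>Convex order: for every convex phi, the integral of phi under F is at most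
  that under G (integrals in the extended sense; they are > -infinity for finite-mean laws,
  so the condition reads: whenever the G-integral is finite, so is the F-integral and it is smaller).\<close>
definition cx_le :: "(real \<Rightarrow> real) \<Rightarrow> (real \<Rightarrow> real) \<Rightarrow> bool" where
  "cx_le F G \<longleftrightarrow> (\<forall>\<phi>. convex_on UNIV \<phi> \<longrightarrow>
      integrable (dist_of G) \<phi> \<longrightarrow>
      integrable (dist_of F) \<phi> \<and> integral\<^sup>L (dist_of F) \<phi> \<le> integral\<^sup>L (dist_of G) \<phi>)"

definition cdf_with_quantile :: "(real \<Rightarrow> real) \<Rightarrow> (real \<Rightarrow> real)" where
  "cdf_with_quantile q = (THE G. is_cdf G \<and> (\<forall>p\<in>{0<..<1}. quantile G p = q p))"

definition comon_sum :: "nat \<Rightarrow> (nat \<Rightarrow> real \<Rightarrow> real) \<Rightarrow> (real \<Rightarrow> real)" where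
  "comon_sum n F = cdf_with_quantile (\<lambda>p. \<Sum>j<n. quantile (F j) p)"

definition conv_class :: "nat \<Rightarrow> (nat \<Rightarrow> real \<Rightarrow> real) \<Rightarrow> (real \<Rightarrow> real) set" where
  "conv_class n F = {G. G \<in> M1 \<and> cx_le G (comon_sum n F)}"

definition doubly_stochastic :: "nat \<Rightarrow> (nat \<Rightarrow> nat \<Rightarrow> real) \<Rightarrow> bool" where
  "doubly_stochastic n L \<longleftrightarrow> (\<forall>i<n. \<forall>j<n. L i j \<ge> 0) \<and>
     (\<forall>i<n. (\<Sum>j<n. L i j) = 1) \<and> (\<forall>j<n. (\<Sum>i<n. L i j) = 1)"

definition qmix :: "nat \<Rightarrow> (nat \<Rightarrow> nat \<Rightarrow> real) \<Rightarrow> (nat \<Rightarrow> real \<Rightarrow> real) \<Rightarrow> (nat \<Rightarrow> real \<Rightarrow> real)" where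
  "qmix n L F = (\<lambda>i. cdf_with_quantile (\<lambda>p. \<Sum>j<n. L i j * quantile (F j) p))"

end

theory Submission
  imports Defs
begin

definition qfun :: "(real \<Rightarrow> real) \<Rightarrow> bool" where
  "qfun q \<longleftrightarrow> (\<forall>r s. 0<r \<longrightarrow> r\<le>s \<longrightarrow> s<1 \<longrightarrow> q r \<le> q s) \<and>
     (\<forall>p x. 0<p \<longrightarrow> p<1 \<longrightarrow> (\<forall>r. 0<r \<longrightarrow> r<p \<longrightarrow> q r \<le> x) \<longrightarrow> q p \<le> x)"

lemma cdf_bounds:
  assumes "is_cdf F" shows "0 \<le> F x \<and> F x \<le> 1"
proof
  have m: "mono F" and l0: "(F \<longlongrightarrow> 0) at_bot" and l1: "(F \<longlongrightarrow> 1) at_top"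
    using assms unfolding is_cdf_def by auto
  have "eventually (\<lambda>y. F y \<le> F x) at_bot"
    unfolding eventually_at_bot_linorder using m by (auto simp: mono_def)
  then show "0 \<le> F x" using tendsto_upperbound[OF l0] by simp
  have "eventually (\<lambda>y. F x \<le> F y) at_top"
    unfolding eventually_at_top_linorder using m by (auto simp: mono_def)
  then show "F x \<le> 1" using tendsto_lowerbound[OF l1] by simp
qed

lemma cdf_galois:
  assumes "is_cdf F" "0 < p" "p < 1"
  shows "quantile F p \<le> x \<longleftrightarrow> p \<le> F x"
proof -
  have m: "mono F" and l0: "(F \<longlongrightarrow> 0) at_bot" and l1: "(F \<longlongrightarrow> 1) at_top"
    and rc: "\<And>x. continuous (at_right x) F"
    using assms unfolding is_cdf_def by auto
  define S where "S = {x. p \<le> F x}"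
  have "eventually (\<lambda>y. p < F y) at_top" using order_tendstoD(1)[OF l1] assms by auto
  then obtain b where b: "\<And>y. y \<ge> b \<Longrightarrow> p < F y" unfolding eventually_at_top_linorder by auto
  have "eventually (\<lambda>y. F y < p) at_bot" using order_tendstoD(2)[OF l0] assms by auto
  then obtain c where c: "\<And>y. y \<le> c \<Longrightarrow> F y < p" unfolding eventually_at_bot_linorder by auto
  have ne: "S \<noteq> {}" using b[of b] unfolding S_def by (auto intro: less_imp_le)
  have bdd: "bdd_below S"
  proof (rule bdd_belowI)
    fix y assume y: "y \<in> S"
    show "c \<le> y"
    proof (rule ccontr)
      assume "\<not> c \<le> y"
      then have "F y < p" using c[of y] by simp
      with y show False unfolding S_def by simp
    qed
  qed
  have q: "quantile F p = Inf S" unfolding quantile_def S_def by simp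
  have key: "p \<le> F (Inf S)"
  proof -
    have "\<And>y. y > Inf S \<Longrightarrow> p \<le> F y"
    proof -
      fix y assume "y > Inf S"
      then obtain s where "s \<in> S" "s < y" using cInf_lessD[OF ne] by blast
      then show "p \<le> F y" using monoD[OF m, of s y] unfolding S_def by simp
    qed
    then have ev: "eventually (\<lambda>y. p \<le> F y) (at_right (Inf S))"
      unfolding eventually_at_right_field by (intro exI[of _ "Inf S + 1"]) auto
    have "(F \<longlongrightarrow> F (Inf S)) (at_right (Inf S))" using rc[of "Inf S"]
      by (simp add: continuous_within)
    from tendsto_lowerbound[OF this ev] show ?thesis by simp
  qed
  show ?thesis
  proof
    assume "quantile F p \<le> x"
    then show "p \<le> F x" using key q monoD[OF m, of "Inf S" x] by simp
  next
    assume "p \<le> F x"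
    then have "x \<in> S" unfolding S_def by simp
    then show "quantile F p \<le> x" using q cInf_lower[OF _ bdd] by simp
  qed
qed

lemma cdf_qfun:
  assumes "is_cdf F" shows "qfun (quantile F)"
  unfolding qfun_def
proof (intro conjI allI impI)
  fix r s :: real assume "0<r" "r\<le>s" "s<1"
  then show "quantile F r \<le> quantile F s"
  proof -
    have "s \<le> F (quantile F s)" using cdf_galois[OF assms, of s "quantile F s"] \<open>0<r\<close> \<open>r\<le>s\<close> \<open>s<1\<close> by simp
    then show ?thesis using cdf_galois[OF assms, of r "quantile F s"] \<open>0<r\<close> \<open>r\<le>s\<close> \<open>s<1\<close> by simp
  qed
next
  fix p x :: real assume p: "0<p" "p<1" and h: "\<forall>r. 0<r \<longrightarrow> r<p \<longrightarrow> quantile F r \<le> x"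
  have "p \<le> F x"
  proof (rule ccontr)
    assume "\<not> p \<le> F x"
    define r where "r = (F x + p)/2"
    have "0 \<le> F x" using cdf_bounds[OF assms] by simp
    then have "0 < r" "r < p" "r > F x" using \<open>\<not> p \<le> F x\<close> p unfolding r_def by auto
    then have "r \<le> F x" using h cdf_galois[OF assms, of r x] p by auto
    then show False using \<open>r > F x\<close> by simp
  qed
  then show "quantile F p \<le> x" using cdf_galois[OF assms p] by simp
qed

lemma qfun_tendsto:
  assumes "qfun q" "0<p" "p<1"
  shows "(q \<longlongrightarrow> q p) (at_left p)"
proof (rule order_tendstoI)
  have qm: "\<And>r s. 0<r \<Longrightarrow> r\<le>s \<Longrightarrow> s<1 \<Longrightarrow> q r \<le> q s"
    and ql: "\<And>p x. 0<p \<Longrightarrow> p<1 \<Longrightarrow> (\<And>r. 0<r \<Longrightarrow> r<p \<Longrightarrow> q r \<le> x) \<Longrightarrow> q p \<le> x"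
    using assms unfolding qfun_def by auto
  {
  fix a assume "a < q p"
  have "\<not> (\<forall>r. 0<r \<longrightarrow> r<p \<longrightarrow> q r \<le> a)"
  proof
    assume "\<forall>r. 0<r \<longrightarrow> r<p \<longrightarrow> q r \<le> a"
    then have "q p \<le> a" using ql[of p a] assms by auto
    with \<open>a < q p\<close> show False by simp
  qed
  then obtain r where r: "0<r" "r<p" "a < q r" by (auto simp: not_le)
  have "\<forall>y>r. y < p \<longrightarrow> a < q y"
  proof (intro allI impI)
    fix y assume "r < y" "y < p"
    then have "q r \<le> q y" using qm[of r y] r assms by simp
    then show "a < q y" using r by simp
  qed
  then show "eventually (\<lambda>y. a < q y) (at_left p)"
    unfolding eventually_at_left_field using r by blast
  }
  fix a assume "a > q p"
  have "\<forall>y>0. y < p \<longrightarrow> q y < a"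
  proof (intro allI impI)
    fix y :: real assume "0 < y" "y < p"
    then have "q y \<le> q p" using qm[of y p] assms by simp
    then show "q y < a" using \<open>a > q p\<close> by simp
  qed
  then show "eventually (\<lambda>y. q y < a) (at_left p)"
    unfolding eventually_at_left_field using assms by blast
qed

lemma qfun_sum:
  assumes "\<And>j. j<n \<Longrightarrow> qfun (q j)" "\<And>j. j<n \<Longrightarrow> c j \<ge> 0"
  shows "qfun (\<lambda>p. \<Sum>j<n. c j * q j p)"
  unfolding qfun_def
proof (intro conjI allI impI)
  fix r s :: real assume "0<r" "r\<le>s" "s<1"
  then show "(\<Sum>j<n. c j * q j r) \<le> (\<Sum>j<n. c j * q j s)"
    using assms unfolding qfun_def by (intro sum_mono mult_left_mono) auto
next
  fix p x :: real assume p: "0<p" "p<1" and h: "\<forall>r. 0<r \<longrightarrow> r<p \<longrightarrow> (\<Sum>j<n. c j * q j r) \<le> x"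
  have t: "((\<lambda>y. \<Sum>j<n. c j * q j y) \<longlongrightarrow> (\<Sum>j<n. c j * q j p)) (at_left p)"
    using qfun_tendsto[OF assms(1) p] by (intro tendsto_sum tendsto_mult_left) auto
  have "eventually (\<lambda>y. (\<Sum>j<n. c j * q j y) \<le> x) (at_left p)"
    unfolding eventually_at_left_field using h p by blast
  from tendsto_upperbound[OF t this] show "(\<Sum>j<n. c j * q j p) \<le> x" by simp
qed

lemma qfun_exists:
  assumes "qfun q"
  shows "\<exists>G. is_cdf G \<and> (\<forall>p\<in>{0<..<1}. quantile G p = q p)"
proof -
  have qm: "\<And>r s. 0<r \<Longrightarrow> r\<le>s \<Longrightarrow> s<1 \<Longrightarrow> q r \<le> q s"
    and ql: "\<And>p x. 0<p \<Longrightarrow> p<1 \<Longrightarrow> (\<And>r. 0<r \<Longrightarrow> r<p \<Longrightarrow> q r \<le> x) \<Longrightarrow> q p \<le> x"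
    using assms unfolding qfun_def by auto
  define A where "A x = insert 0 {p. 0<p \<and> p<1 \<and> q p \<le> x}" for x
  define G where "G x = Sup (A x)" for x
  have bA: "bdd_above (A x)" for x unfolding A_def bdd_above_def by (rule exI[of _ 1]) auto
  have G0: "0 \<le> G x" for x unfolding G_def by (rule cSup_upper[OF _ bA]) (simp add: A_def)
  have G1: "G x \<le> 1" for x unfolding G_def by (rule cSup_least) (auto simp: A_def)
  have gal: "p \<le> G x \<longleftrightarrow> q p \<le> x" if p: "0<p" "p<1" for p x
  proof
    assume "q p \<le> x"
    then show "p \<le> G x" unfolding G_def by (intro cSup_upper[OF _ bA]) (simp add: A_def p)
  next
    assume pG: "p \<le> G x"
    show "q p \<le> x"
    proof (rule ccontr)
      assume "\<not> q p \<le> x"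
      then obtain r where r: "0<r" "r<p" "\<not> q r \<le> x" using ql[OF p] by blast
      have "G x \<le> r" unfolding G_def
      proof (rule cSup_least)
        show "A x \<noteq> {}" by (simp add: A_def)
        fix s assume "s \<in> A x"
        show "s \<le> r"
        proof (cases "s = 0")
          case True then show ?thesis using r by simp
        next
          case False
          then have s: "0 < s" "s < 1" "q s \<le> x" using \<open>s \<in> A x\<close> unfolding A_def by auto
          show ?thesis
          proof (rule ccontr)
            assume "\<not> s \<le> r"
            then have "q r \<le> q s" using qm[of r s] r s by simp
            then show False using s r by simp
          qed
        qed
      qed
      then show False using r pG by simp
    qed
  qed
  have Gmono: "G x \<le> G y" if "x \<le> y" for x y
  proof (rule ccontr)
    assume "\<not> G x \<le> G y"
    define p where "p = (G x + G y)/2"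
    have p: "0 < p" "p < 1" "p \<le> G x" "\<not> p \<le> G y"
      using G0[of y] G1[of x] \<open>\<not> G x \<le> G y\<close> unfolding p_def by auto
    then show False using gal[of p x] gal[of p y] that by auto
  qed
  have "is_cdf G" unfolding is_cdf_def
  proof (intro conjI allI)
    show "mono G" using Gmono by (auto simp: mono_def)
  next
    fix x
    show "continuous (at_right x) G" unfolding continuous_within
    proof (rule order_tendstoI)
      fix a assume "a < G x"
      then show "eventually (\<lambda>y. a < G y) (at_right x)"
        unfolding eventually_at_right_field using Gmono
        by (intro exI[of _ "x+1"]) (auto intro: less_le_trans)
    next
      fix a assume a: "G x < a"
      show "eventually (\<lambda>y. G y < a) (at_right x)"
      proof (cases "a > 1")
        case True then show ?thesis using G1 by (intro always_eventually) (auto intro: le_less_trans)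
      next
        case False
        define p where "p = (G x + a)/2"
        have p: "0 < p" "p < 1" "\<not> p \<le> G x" "p < a"
          using G0[of x] a False unfolding p_def by auto
        then have "x < q p" using gal[of p x] by auto
        have "\<forall>y>x. y < q p \<longrightarrow> G y < a"
        proof (intro allI impI)
          fix y assume "x < y" "y < q p"
          then have "\<not> p \<le> G y" using gal[OF p(1,2), of y] by auto
          then show "G y < a" using p(4) by auto
        qed
        then show ?thesis unfolding eventually_at_right_field using \<open>x < q p\<close> by blast
      qed
    qed
  next
    show "(G \<longlongrightarrow> 0) at_bot"
    proof (rule order_tendstoI)
      fix a :: real assume "a < 0"
      then show "eventually (\<lambda>y. a < G y) at_bot" using G0 by (intro always_eventually) (auto intro: less_le_trans)
    next
      fix a :: real assume "a > 0"
      define p where "p = min a (1/2)"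
      have p: "0 < p" "p < 1" "p \<le> a" using \<open>a>0\<close> unfolding p_def by auto
      have "\<forall>y\<le>q p - 1. G y < a"
      proof (intro allI impI)
        fix y assume "y \<le> q p - 1"
        then have "\<not> p \<le> G y" using gal[OF p(1,2), of y] by auto
        then show "G y < a" using p(3) by auto
      qed
      then show "eventually (\<lambda>y. G y < a) at_bot" unfolding eventually_at_bot_linorder by blast
    qed
  next
    show "(G \<longlongrightarrow> 1) at_top"
    proof (rule order_tendstoI)
      fix a :: real assume "a > 1"
      then show "eventually (\<lambda>y. G y < a) at_top" using G1 by (intro always_eventually) (auto intro: le_less_trans)
    next
      fix a :: real assume "a < 1"
      define p where "p = max ((a+1)/2) (1/2)"
      have p: "0 < p" "p < 1" "a < p" using \<open>a<1\<close> unfolding p_def by (auto simp: max_def)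
      have "\<forall>y\<ge>q p. a < G y"
      proof (intro allI impI)
        fix y assume "q p \<le> y"
        then have "p \<le> G y" using gal[OF p(1,2), of y] by auto
        then show "a < G y" using p(3) by auto
      qed
      then show "eventually (\<lambda>y. a < G y) at_top" unfolding eventually_at_top_linorder by blast
    qed
  qed
  moreover have "quantile G p = q p" if "p\<in>{0<..<1}" for p
  proof -
    have "{x. p \<le> G x} = {q p..}" using gal[of p] that by auto
    then show ?thesis unfolding quantile_def by simp
  qed
  ultimately show ?thesis by blast
qed

lemma cdf_unique:
  assumes "is_cdf G" "is_cdf H" "\<forall>p\<in>{0<..<1}. quantile G p = quantile H p"
  shows "G = H"
proof
  fix x
  show "G x = H x"
  proof (rule ccontr)
    assume ne: "G x \<noteq> H x"
    define p where "p = (G x + H x)/2"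
    have p: "0 < p" "p < 1" using cdf_bounds[OF assms(1), of x] cdf_bounds[OF assms(2), of x] ne
      unfolding p_def by auto
    have "p \<le> G x \<longleftrightarrow> p \<le> H x"
      using cdf_galois[OF assms(1) p] cdf_galois[OF assms(2) p] assms(3) p by auto
    then show False using ne unfolding p_def by auto
  qed
qed

lemma cdf_with_quantile_props:
  assumes "qfun q"
  shows "is_cdf (cdf_with_quantile q) \<and> (\<forall>p\<in>{0<..<1}. quantile (cdf_with_quantile q) p = q p)"
proof -
  have "\<exists>!G. is_cdf G \<and> (\<forall>p\<in>{0<..<1}. quantile G p = q p)"
  proof -
    obtain G where G: "is_cdf G" "\<forall>p\<in>{0<..<1}. quantile G p = q p" using qfun_exists[OF assms] by blast
    show ?thesis
    proof (rule ex1I[of _ G])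
      show "is_cdf G \<and> (\<forall>p\<in>{0<..<1}. quantile G p = q p)" using G by simp
      fix H assume "is_cdf H \<and> (\<forall>p\<in>{0<..<1}. quantile H p = q p)"
      then show "H = G" using cdf_unique[of H G] G by simp
    qed
  qed
  then show ?thesis unfolding cdf_with_quantile_def by (rule theI')
qed

lemma cdf_with_quantile_cong:
  assumes "\<forall>p\<in>{0<..<1}. q p = q' p"
  shows "cdf_with_quantile q = cdf_with_quantile q'"
  unfolding cdf_with_quantile_def using assms by simp

theorem proposition7:
  fixes n :: nat and F :: "nat \<Rightarrow> real \<Rightarrow> real" and L :: "nat \<Rightarrow> nat \<Rightarrow> real"
  assumes "\<forall>i<n. F i \<in> M1"
    and "doubly_stochastic n L"
  shows "conv_class n F = conv_class n (qmix n L F)"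
proof -
  have qf: "qfun (quantile (F j))" if "j<n" for j
    using assms(1) that cdf_qfun unfolding M1_def by auto
  have Lpos: "\<And>i j. i<n \<Longrightarrow> j<n \<Longrightarrow> L i j \<ge> 0" and cs: "\<And>j. j<n \<Longrightarrow> (\<Sum>i<n. L i j) = 1"
    using assms(2) unfolding doubly_stochastic_def by auto
  have qm: "quantile (qmix n L F i) p = (\<Sum>j<n. L i j * quantile (F j) p)"
    if "i<n" "p\<in>{0<..<1}" for i p
  proof -
    have "qfun (\<lambda>p. \<Sum>j<n. L i j * quantile (F j) p)"
      using qf Lpos that by (intro qfun_sum) auto
    from cdf_with_quantile_props[OF this] that show ?thesis unfolding qmix_def by auto
  qed
  have "comon_sum n (qmix n L F) = cdf_with_quantile (\<lambda>p. \<Sum>i<n. \<Sum>j<n. L i j * quantile (F j) p)"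
    unfolding comon_sum_def by (rule cdf_with_quantile_cong) (simp add: qm)
  also have "(\<lambda>p. \<Sum>i<n. \<Sum>j<n. L i j * quantile (F j) p) = (\<lambda>p. \<Sum>j<n. quantile (F j) p)"
  proof
    fix p
    have "(\<Sum>i<n. \<Sum>j<n. L i j * quantile (F j) p) = (\<Sum>j<n. (\<Sum>i<n. L i j) * quantile (F j) p)"
      by (subst sum.swap) (simp add: sum_distrib_right)
    also have "\<dots> = (\<Sum>j<n. quantile (F j) p)" using cs by simp
    finally show "(\<Sum>i<n. \<Sum>j<n. L i j * quantile (F j) p) = (\<Sum>j<n. quantile (F j) p)" .
  qed
  finally have "comon_sum n (qmix n L F) = comon_sum n F" unfolding comon_sum_def by simp
  then show ?thesis unfolding conv_class_def by simp
qed

end
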